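(* Let $G$ be a network (as in the context) that contains a directed circuit, and consider (BBMG) on $G$ with $a_i>0$, $b_i\in\mathbb{R}\setminus\{0\}$, $d_i\in\mathbb{R}$. Then there is no non-constant travelling wave solution $u$ of (BBMG) with all speeds $c_i>0$ whose profiles $\varphi_i$ are all solitary.
   Context: A network $G$ is obtained from a non-empty, simple, connected, at most countable, locally finite graph by realizing each edge $\mathsf{e}_j$ ($j\in\mathbf{E}\subset\mathbb{N}$) as the image of a $\mathcal{C}^2$ Jordan curve $\pi_j:[0,\ell_j]\to\mathbb{R}^m$ with arc-length parameter $x_j$; distinct edges meet in at most one common vertex. $N(\mathsf{v})$ is the set of indices of edges at $\mathsf{v}$; $V_r$ the set of vertices of degree $\ge2$; $\iota_{ij}=1$ if $\pi_j(\ell_j)=\mathsf{v}_i$, $-1$ if $\pi_j(0)=\mathsf{v}_i$, $0$ otherwise. A directed circuit is a sequence of $n\ge2$ edges $\mathsf{e}_{1},\dots,\mathsf{e}_{n}$ with $\pi_{i}(\ell_{i})=\pi_{i+1}(0)$ for $1\le i<n$ and $\pi_n(\ell_n)=\pi_1(0)$. (BBMG): $\partial_t u_i - a_i\partial_i^2\partial_t u_i + b_i u_i\partial_i u_i + d_i\partial_i u_i=0$ on each $\mathsf{e}_i$, $t>0$; for each $\mathsf{v}_p\in V_r$, $t\ge0$: $u_j(t,\mathsf{v}_p)=u_k(t,\mathsf{v}_p)$ for $j,k\in N(\mathsf{v}_p)$ and $\sum_j\iota_{pj}a_j\partial_ju_j(t,\mathsf{v}_p)=0$ (values at $\mathsf{v}_p$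 meaning at $x_j=\pi_j^{-1}(\mathsf{v}_p)$, $\partial_j=\partial/\partial x_j$). A strong solution is continuous on $G$ with $u_i\in\mathcal{C}^{1,1}(\mathsf{e}_i\times[0,\infty))$, $\partial_tu_i\in\mathcal{C}^{2,0}(\mathsf{e}_i\times[0,\infty))$, satisfying (BBMG) pointwise. A travelling wave is a strong solution with speeds $c_i\ge0$ and $\varphi_i\in\mathcal{C}^3(\mathbb{R})$ such that $u_i(x_i,t)=\varphi_i(x_i-c_it)$ for $x_i\in\mathsf{e}_i$, $t\ge0$. A function $\varphi:\mathbb{R}\to\mathbb{R}$ is solitary if it has at most one local extremum and $\lim_{z\to\pm\infty}\varphi(z)$ exist in $\mathbb{R}$. *)

theory Defs
  imports "HOL-Analysis.Analysis"
begin

definition edge_set :: "(nat \<Rightarrow> real) \<Rightarrow> (nat \<Rightarrow> real \<Rightarrow> 'a) \<Rightarrow> nat \<Rightarrow> 'a set" where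
  "edge_set len p j = p j ` {0..len j}"

definition ends :: "(nat \<Rightarrow> real) \<Rightarrow> (nat \<Rightarrow> real \<Rightarrow> 'a) \<Rightarrow> nat \<Rightarrow> 'a set" where
  "ends len p j = {p j 0, p j (len j)}"

definition vertices :: "nat set \<Rightarrow> (nat \<Rightarrow> real) \<Rightarrow> (nat \<Rightarrow> real \<Rightarrow> 'a) \<Rightarrow> 'a set" where
  "vertices E len p = (\<Union>j\<in>E. ends len p j)"

definition incident :: "nat set \<Rightarrow> (nat \<Rightarrow> real) \<Rightarrow> (nat \<Rightarrow> real \<Rightarrow> 'a) \<Rightarrow> 'a \<Rightarrow> nat set" where
  "incident E len p v = {j\<in>E. v \<in> ends len p j}"

definition ramification_vertices :: "nat set \<Rightarrow> (nat \<Rightarrow> real) \<Rightarrow> (nat \<Rightarrow> real \<Rightarrow> 'a) \<Rightarrow> 'a set" where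
  "ramification_vertices E len p = {v\<in>vertices E len p. 2 \<le> card (incident E len p v)}"

definition iota :: "(nat \<Rightarrow> real) \<Rightarrow> (nat \<Rightarrow> real \<Rightarrow> 'a) \<Rightarrow> 'a \<Rightarrow> nat \<Rightarrow> real" where
  "iota len p v j = (if p j (len j) = v then 1 else if p j 0 = v then -1 else 0)"

text \<open>Arc-length coordinate of vertex v on edge j, i.e. the inverse of p j at v.\<close>
definition vpos :: "(nat \<Rightarrow> real) \<Rightarrow> (nat \<Rightarrow> real \<Rightarrow> 'a) \<Rightarrow> 'a \<Rightarrow> nat \<Rightarrow> real" where
  "vpos len p v j = (if p j 0 = v then 0 else len j)"

definition adjacency :: "nat set \<Rightarrow> (nat \<Rightarrow> real) \<Rightarrow> (nat \<Rightarrow> real \<Rightarrow> 'a) \<Rightarrow> ('a \<times> 'a) set" where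
  "adjacency E len p = {(v, w). \<exists>j\<in>E. {v, w} = ends len p j}"

definition C2_arclength_arc :: "real \<Rightarrow> (real \<Rightarrow> 'a::euclidean_space) \<Rightarrow> bool" where
  "C2_arclength_arc l p \<longleftrightarrow> 0 < l \<and> inj_on p {0..l} \<and>
     (\<exists>p' p''. (\<forall>x\<in>{0..l}. (p has_vector_derivative p' x) (at x within {0..l})
                            \<and> (p' has_vector_derivative p'' x) (at x within {0..l})
                            \<and> norm (p' x) = 1)
              \<and> continuous_on {0..l} p'')"

definition network :: "nat set \<Rightarrow> (nat \<Rightarrow> real) \<Rightarrow> (nat \<Rightarrow> real \<Rightarrow> 'a::euclidean_space) \<Rightarrow> bool" where
  "network E len p \<longleftrightarrow>
     E \<noteq> {} \<and>
     (\<forall>j\<in>E. C2_arclength_arc (len j) (p j)) \<and>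
     (\<forall>i\<in>E. \<forall>j\<in>E. i \<noteq> j \<longrightarrow>
         edge_set len p i \<inter> edge_set len p j \<subseteq> ends len p i \<inter> ends len p j
         \<and> card (ends len p i \<inter> ends len p j) \<le> 1) \<and>
     (\<forall>v\<in>vertices E len p. finite (incident E len p v)) \<and>
     (\<forall>v\<in>vertices E len p. \<forall>w\<in>vertices E len p. (v, w) \<in> (adjacency E len p)\<^sup>*)"

definition has_directed_circuit :: "nat set \<Rightarrow> (nat \<Rightarrow> real) \<Rightarrow> (nat \<Rightarrow> real \<Rightarrow> 'a) \<Rightarrow> bool" where
  "has_directed_circuit E len p \<longleftrightarrow>
     (\<exists>es. 2 \<le> length es \<and> set es \<subseteq> E \<and>
        (\<forall>k. Suc k < length es \<longrightarrow> p (es!k) (len (es!k)) = p (es!Suc k) 0) \<and>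
        p (last es) (len (last es)) = p (hd es) 0)"

text \<open>u i x t is the value on edge i at arc-length x and time t.
  ux = partial_x u, ut = partial_t u, utx = partial_x partial_t u, utxx = partial_x^2 partial_t u,
  all taken within the closed domain {0..len i} x [0,oo).\<close>
definition strong_solution ::
  "nat set \<Rightarrow> (nat \<Rightarrow> real) \<Rightarrow> (nat \<Rightarrow> real \<Rightarrow> 'a) \<Rightarrow> (nat \<Rightarrow> real) \<Rightarrow> (nat \<Rightarrow> real) \<Rightarrow> (nat \<Rightarrow> real)
     \<Rightarrow> (nat \<Rightarrow> real \<Rightarrow> real \<Rightarrow> real) \<Rightarrow> bool" where
  "strong_solution E len p a b d u \<longleftrightarrow>
    (\<exists>ux ut utx utxx.
      (\<forall>i\<in>E.
         continuous_on ({0..len i} \<times> {0..}) (\<lambda>(x, t). u i x t) \<and>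
         continuous_on ({0..len i} \<times> {0..}) (\<lambda>(x, t). ux i x t) \<and>
         continuous_on ({0..len i} \<times> {0..}) (\<lambda>(x, t). ut i x t) \<and>
         continuous_on ({0..len i} \<times> {0..}) (\<lambda>(x, t). utx i x t) \<and>
         continuous_on ({0..len i} \<times> {0..}) (\<lambda>(x, t). utxx i x t) \<and>
         (\<forall>x\<in>{0..len i}. \<forall>t\<ge>0.
            ((\<lambda>y. u i y t) has_real_derivative ux i x t) (at x within {0..len i}) \<and>
            ((\<lambda>s. u i x s) has_real_derivative ut i x t) (at t within {0..}) \<and>
            ((\<lambda>y. ut i y t) has_real_derivative utx i x t) (at x within {0..len i}) \<and>
            ((\<lambda>y. utx i y t) has_real_derivative utxx i x t) (at x within {0..len i})) \<and>
         (\<forall>x\<in>{0..len i}. \<forall>t>0.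
            ut i x t - a i * utxx i x t + b i * u i x t * ux i x t + d i * ux i x t = 0)) \<and>
      (\<forall>v\<in>ramification_vertices E len p. \<forall>t\<ge>0.
         (\<forall>j\<in>incident E len p v. \<forall>k\<in>incident E len p v.
             u j (vpos len p v j) t = u k (vpos len p v k) t) \<and>
         (\<Sum>j\<in>incident E len p v. iota len p v j * a j * ux j (vpos len p v j) t) = 0))"

definition C3 :: "(real \<Rightarrow> real) \<Rightarrow> bool" where
  "C3 f \<longleftrightarrow> (\<forall>k<3. \<forall>x. ((deriv ^^ k) f) differentiable (at x)) \<and> continuous_on UNIV ((deriv ^^ 3) f)"

definition travelling_wave ::
  "nat set \<Rightarrow> (nat \<Rightarrow> real) \<Rightarrow> (nat \<Rightarrow> real \<Rightarrow> 'a) \<Rightarrow> (nat \<Rightarrow> real) \<Rightarrow> (nat \<Rightarrow> real) \<Rightarrow> (nat \<Rightarrow> real)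
     \<Rightarrow> (nat \<Rightarrow> real \<Rightarrow> real \<Rightarrow> real) \<Rightarrow> (nat \<Rightarrow> real) \<Rightarrow> (nat \<Rightarrow> real \<Rightarrow> real) \<Rightarrow> bool" where
  "travelling_wave E len p a b d u c phi \<longleftrightarrow>
     strong_solution E len p a b d u \<and>
     (\<forall>i\<in>E. 0 \<le> c i \<and> C3 (phi i) \<and>
        (\<forall>x\<in>{0..len i}. \<forall>t\<ge>0. u i x t = phi i (x - c i * t)))"

definition local_extremum :: "(real \<Rightarrow> real) \<Rightarrow> real \<Rightarrow> bool" where
  "local_extremum f z \<longleftrightarrow>
     (\<exists>e>0. \<forall>y. \<bar>y - z\<bar> < e \<longrightarrow> f y \<le> f z) \<or> (\<exists>e>0. \<forall>y. \<bar>y - z\<bar> < e \<longrightarrow> f z \<le> f y)"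

definition solitary :: "(real \<Rightarrow> real) \<Rightarrow> bool" where
  "solitary f \<longleftrightarrow> (\<forall>z1 z2. local_extremum f z1 \<and> local_extremum f z2 \<longrightarrow> z1 = z2) \<and>
     (\<exists>L. (f \<longlongrightarrow> L) at_top) \<and> (\<exists>L. (f \<longlongrightarrow> L) at_bot)"

end

theory Submission
  imports Defs "HOL-Real_Asymp.Real_Asymp"
begin

lemma seq_at_bot:
  fixes A B :: real assumes "B > 0"
  shows "filterlim (\<lambda>m::nat. A - B * real m) at_bot sequentially"
  using assms by real_asymp

theorem lemma7p1:
  fixes E :: "nat set" and len :: "nat \<Rightarrow> real" and p :: "nat \<Rightarrow> real \<Rightarrow> 'a::euclidean_space"
    and a b d :: "nat \<Rightarrow> real"
  assumes "network E len p"
    and "has_directed_circuit E len p"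
    and "\<forall>i\<in>E. 0 < a i \<and> b i \<noteq> 0"
  shows "\<not> (\<exists>u c phi. travelling_wave E len p a b d u c phi \<and>
              (\<forall>i\<in>E. 0 < c i) \<and> (\<forall>i\<in>E. solitary (phi i)) \<and>
              (\<exists>i\<in>E. \<exists>j\<in>E. \<exists>x\<in>{0..len i}. \<exists>y\<in>{0..len j}. \<exists>t\<ge>0. \<exists>s\<ge>0. u i x t \<noteq> u j y s))"
proof
  assume "\<exists>u c phi. travelling_wave E len p a b d u c phi \<and>
              (\<forall>i\<in>E. 0 < c i) \<and> (\<forall>i\<in>E. solitary (phi i)) \<and>
              (\<exists>i\<in>E. \<exists>j\<in>E. \<exists>x\<in>{0..len i}. \<exists>y\<in>{0..len j}. \<exists>t\<ge>0. \<exists>s\<ge>0. u i x t \<noteq> u j y s)"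
  then obtain u c phi where tw: "travelling_wave E len p a b d u c phi"
    and cpos: "\<forall>i\<in>E. 0 < c i" and sol: "\<forall>i\<in>E. solitary (phi i)" by blast
  have net: "\<forall>j\<in>E. C2_arclength_arc (len j) (p j)"
    and fin: "\<forall>v\<in>vertices E len p. finite (incident E len p v)"
    using assms(1) unfolding network_def by auto
  have lenpos: "\<And>j. j \<in> E \<Longrightarrow> 0 < len j" using net unfolding C2_arclength_arc_def by auto
  have injp: "\<And>j. j \<in> E \<Longrightarrow> inj_on (p j) {0..len j}" using net unfolding C2_arclength_arc_def by auto
  have endsdiff: "\<And>j. j \<in> E \<Longrightarrow> p j 0 \<noteq> p j (len j)"
  proof -
    fix j assume j: "j \<in> E"
    show "p j 0 \<noteq> p j (len j)"
      using injp[OF j] lenpos[OF j] unfolding inj_on_def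
      by (metis atLeastAtMost_iff order_refl less_imp_le less_irrefl)
  qed
  have uphi: "\<And>i x t. i \<in> E \<Longrightarrow> x \<in> {0..len i} \<Longrightarrow> t \<ge> 0 \<Longrightarrow> u i x t = phi i (x - c i * t)"
    using tw unfolding travelling_wave_def by auto
  obtain ux ut utx utxx where vcond:
    "\<forall>v\<in>ramification_vertices E len p. \<forall>t\<ge>0.
         (\<forall>j\<in>incident E len p v. \<forall>k\<in>incident E len p v.
             u j (vpos len p v j) t = u k (vpos len p v k) t)"
    using tw unfolding travelling_wave_def strong_solution_def by blast
  have vertex: "\<And>i j t. i \<in> E \<Longrightarrow> j \<in> E \<Longrightarrow> p i (len i) = p j 0 \<Longrightarrow> t \<ge> 0 \<Longrightarrow>
      u i (len i) t = u j 0 t"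
  proof -
    fix i j and t :: real
    assume i: "i \<in> E" and j: "j \<in> E" and h: "p i (len i) = p j 0" and t: "t \<ge> 0"
    define v where "v = p i (len i)"
    have ij: "i \<noteq> j" using h endsdiff[OF j] by auto
    have vv: "v \<in> vertices E len p" using i unfolding vertices_def ends_def v_def by auto
    have ii: "i \<in> incident E len p v" using i unfolding incident_def ends_def v_def by auto
    have jj: "j \<in> incident E len p v" using j h unfolding incident_def ends_def v_def by auto
    have "card {i, j} \<le> card (incident E len p v)"
      using fin vv ii jj by (intro card_mono) auto
    then have "2 \<le> card (incident E len p v)" using ij by simp
    then have "v \<in> ramification_vertices E len p"
      using vv unfolding ramification_vertices_def by auto
    then have "u i (vpos len p v i) t = u j (vpos len p v j) t"
      using vcond ii jj t by blast
    moreover have "vpos len p v i = len i" using endsdiff[OF i] unfolding vpos_def v_def by auto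
    moreover have "vpos len p v j = 0" using h unfolding vpos_def v_def by auto
    ultimately show "u i (len i) t = u j 0 t" by simp
  qed
  have wave: "\<And>j t. j \<in> E \<Longrightarrow> t \<ge> 0 \<Longrightarrow> u j (len j) (t + len j / c j) = u j 0 t"
  proof -
    fix j and t :: real assume j: "j \<in> E" and t: "t \<ge> 0"
    have cj: "c j > 0" using cpos j by auto
    have "u j (len j) (t + len j / c j) = phi j (len j - c j * (t + len j / c j))"
      using uphi[OF j] lenpos[OF j] t cj by (simp add: less_imp_le)
    also have "len j - c j * (t + len j / c j) = 0 - c j * t" using cj by (simp add: field_simps)
    also have "phi j (0 - c j * t) = u j 0 t" using uphi[OF j] lenpos[OF j] t by simp
    finally show "u j (len j) (t + len j / c j) = u j 0 t" .
  qed
  obtain es where es2: "2 \<le> length es" and esE: "set es \<subseteq> E"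
    and chain: "\<forall>k. Suc k < length es \<longrightarrow> p (es!k) (len (es!k)) = p (es!Suc k) 0"
    and close: "p (last es) (len (last es)) = p (hd es) 0"
    using assms(2) unfolding has_directed_circuit_def by blast
  define n where "n = length es"
  have esk: "\<And>k. k < n \<Longrightarrow> es!k \<in> E" using esE unfolding n_def by auto
  define tau where "tau k = len (es!k) / c (es!k)" for k
  define S where "S k = (\<Sum>i\<le>k. tau i)" for k
  have claim: "\<And>k. k < n \<Longrightarrow> \<forall>t\<ge>0. u (es!k) (len (es!k)) (t + S k) = u (es!0) 0 t"
  proof -
    fix k show "k < n \<Longrightarrow> \<forall>t\<ge>0. u (es!k) (len (es!k)) (t + S k) = u (es!0) 0 t"
    proof (induction k)
      case 0
      then show ?case using wave[OF esk[OF 0]] by (simp add: S_def tau_def)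
    next
      case (Suc k)
      show ?case
      proof (intro allI impI)
        fix t :: real assume t: "t \<ge> 0"
        have k1: "es!Suc k \<in> E" "es!k \<in> E" using Suc.prems esk by auto
        have taupos: "tau i \<ge> 0" if "i < n" for i
          using lenpos[OF esk[OF that]] cpos esk[OF that] unfolding tau_def by (auto intro: less_imp_le)
        have Sk: "S k \<ge> 0" unfolding S_def using Suc.prems taupos by (intro sum_nonneg) auto
        have "u (es!Suc k) (len (es!Suc k)) (t + S (Suc k))
              = u (es!Suc k) (len (es!Suc k)) ((t + S k) + len (es!Suc k) / c (es!Suc k))"
          by (simp add: S_def tau_def algebra_simps)
        also have "\<dots> = u (es!Suc k) 0 (t + S k)" using wave[OF k1(1)] t Sk by simp
        also have "\<dots> = u (es!k) (len (es!k)) (t + S k)"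
          using vertex[OF k1(2) k1(1)] chain Suc.prems t Sk unfolding n_def by simp
        also have "\<dots> = u (es!0) 0 t" using Suc.IH Suc.prems t by simp
        finally show "u (es!Suc k) (len (es!Suc k)) (t + S (Suc k)) = u (es!0) 0 t" .
      qed
    qed
  qed
  define j where "j = es!(n - 1)"
  define T where "T = S (n - 1)"
  have jE: "j \<in> E" using esk es2 unfolding j_def n_def by auto
  have lastj: "last es = j" using es2 unfolding j_def n_def
    by (subst last_conv_nth) auto
  have hd0: "hd es = es!0" using es2 by (subst hd_conv_nth) auto
  have e0: "es!0 \<in> E" using esk[of 0] es2 unfolding n_def by force
  have per: "\<And>t. t \<ge> 0 \<Longrightarrow> u j (len j) (t + T) = u j (len j) t"
  proof -
    fix t :: real assume t: "t \<ge> 0"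
    have "u j (len j) (t + T) = u (es!0) 0 t"
      using claim[of "n-1"] es2 t unfolding j_def T_def n_def by simp
    also have "\<dots> = u j (len j) t"
      using vertex[OF jE e0] close lastj hd0 t by simp
    finally show "u j (len j) (t + T) = u j (len j) t" .
  qed
  have cj: "c j > 0" using cpos jE by auto
  have Tpos: "T > 0"
  proof -
    have taupos: "tau i > 0" if "i < n" for i
      using lenpos[OF esk[OF that]] cpos esk[OF that] unfolding tau_def by auto
    have "tau 0 \<le> S (n - 1)" unfolding S_def
      using taupos es2 unfolding n_def by (intro member_le_sum) (auto intro: less_imp_le)
    then show ?thesis using taupos[of 0] es2 unfolding T_def n_def by force
  qed
  have perm: "\<And>m t. t \<ge> 0 \<Longrightarrow> u j (len j) (t + real m * T) = u j (len j) t"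
  proof -
    fix m :: nat and t :: real assume t: "t \<ge> 0"
    show "u j (len j) (t + real m * T) = u j (len j) t"
    proof (induction m)
      case 0 then show ?case by simp
    next
      case (Suc m)
      have "t + real (Suc m) * T = (t + real m * T) + T" by (simp add: algebra_simps)
      then show ?case using per[of "t + real m * T"] t Tpos Suc.IH by (simp add: add.assoc)
    qed
  qed
  obtain L where L: "(phi j \<longlongrightarrow> L) at_bot" using sol jE unfolding solitary_def by blast
  have const: "\<And>t. t \<ge> 0 \<Longrightarrow> u j (len j) t = L"
  proof -
    fix t :: real assume t: "t \<ge> 0"
    have lim1: "filterlim (\<lambda>m::nat. (len j - c j * t) - (c j * T) * real m) at_bot sequentially"
      using cj Tpos by (intro seq_at_bot) simp
    have "(\<lambda>m::nat. phi j ((len j - c j * t) - (c j * T) * real m)) \<longlonglongrightarrow> L"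
      using filterlim_compose[OF L lim1] .
    moreover have "\<And>m. phi j ((len j - c j * t) - (c j * T) * real m) = u j (len j) t"
    proof -
      fix m :: nat
      have "u j (len j) (t + real m * T) = phi j (len j - c j * (t + real m * T))"
        using uphi[OF jE] lenpos[OF jE] t Tpos by (simp add: less_imp_le)
      moreover have "len j - c j * (t + real m * T) = (len j - c j * t) - (c j * T) * real m"
        by (simp add: algebra_simps)
      ultimately show "phi j ((len j - c j * t) - (c j * T) * real m) = u j (len j) t"
        using perm[OF t] by simp
    qed
    ultimately have "(\<lambda>m::nat. u j (len j) t) \<longlonglongrightarrow> L" by simp
    then show "u j (len j) t = L" using LIMSEQ_const_iff by blast
  qed
  have phiL: "\<And>z. z \<le> len j \<Longrightarrow> phi j z = L"
  proof -
    fix z assume z: "z \<le> len j"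
    define t where "t = (len j - z) / c j"
    have t: "t \<ge> 0" using z cj unfolding t_def by simp
    have "u j (len j) t = phi j (len j - c j * t)"
      using uphi[OF jE] lenpos[OF jE] t by (simp add: less_imp_le)
    also have "len j - c j * t = z" using cj unfolding t_def by simp
    finally show "phi j z = L" using const[OF t] by simp
  qed
  have ext: "\<And>z. z \<le> len j - 1 \<Longrightarrow> local_extremum (phi j) z"
  proof -
    fix z assume z: "z \<le> len j - 1"
    have "\<forall>y. \<bar>y - z\<bar> < 1/2 \<longrightarrow> phi j y \<le> phi j z"
    proof (intro allI impI)
      fix y assume "\<bar>y - z\<bar> < 1/2"
      then have "y \<le> len j" using z by linarith
      then show "phi j y \<le> phi j z" using phiL z by simp
    qed
    then show "local_extremum (phi j) z" unfolding local_extremum_def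
      by (intro disjI1 exI[of _ "1/2"]) simp
  qed
  have "len j - 1 = len j - 2"
    using sol jE ext[of "len j - 1"] ext[of "len j - 2"] unfolding solitary_def by auto
  then show False by simp
qed

end
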